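(* Let $N\ge 2$, $g=N-1$, and let $a_1,\dots,a_N\in\mathbb{C}$ be fixed, $Q(\lambda)=\prod_{i=1}^N(\lambda-a_i)$. Consider the operators $\lambda_1,\dots,\lambda_g$ (multiplication operators) and $\mu_j=i\hbar\,\partial/\partial\lambda_j$, acting on smooth functions on the open set of $\mathbb{C}^g$ (or $\mathbb{R}^g$) where the $\lambda_j$ are pairwise distinct; they satisfy $[\mu_j,\lambda_k]=i\hbar\,\delta_{jk}$, $[\lambda_j,\lambda_k]=[\mu_j,\mu_k]=0$. With $S_j(\lambda)=\prod_{k\neq j}(\lambda-\lambda_k)/\prod_{k\neq j}(\lambda_j-\lambda_k)$, define the operator-valued polynomial in $\lambda$ $$P(\lambda)=\prod_{i=1}^g(\lambda-\lambda_i)+\sum_{j=1}^g S_j(\lambda)\,Q(\lambda_j)\,\mu_j^2,$$ (with the functions of $\lambda_1,\dots,\lambda_g$ placed to the left of $\mu_j^2$). Then $[P(\lambda),P(\lambda')]=0$ for all $\lambda,\lambda'\in\mathbb{C}$.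
   Context: $P(\lambda)$ is the monic polynomial of degree $g$ solving the quantum Baxter equations $P(\lambda_i)=Q(\lambda_i)\mu_i^2$ for the spectral curve $\mu^2=P(\lambda)/Q(\lambda)$ of the Neumann model; its non-leading coefficients are the Hamiltonians. *)

theory Defs
  imports "HOL-Analysis.Analysis"
begin

text \<open>Coordinates lambda_1..lambda_g are the components of x :: real^'g, g = CARD('g).\<close>

definition pd :: "'g::finite \<Rightarrow> (real^'g \<Rightarrow> complex) \<Rightarrow> real^'g \<Rightarrow> complex" where
  "pd j f x = vector_derivative (\<lambda>t. f (x + t *\<^sub>R axis j 1)) (at 0)"

fun iter_pd :: "'g::finite list \<Rightarrow> (real^'g \<Rightarrow> complex) \<Rightarrow> real^'g \<Rightarrow> complex" where
  "iter_pd [] f = f"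
| "iter_pd (j # js) f = pd j (iter_pd js f)"

definition smooth_on :: "(real^'g::finite) set \<Rightarrow> (real^'g \<Rightarrow> complex) \<Rightarrow> bool" where
  "smooth_on U f \<longleftrightarrow> (\<forall>js. \<forall>x\<in>U. iter_pd js f differentiable (at x))"

definition distinct_coords :: "(real^'g::finite) set" where
  "distinct_coords = {x. \<forall>j k. j \<noteq> k \<longrightarrow> x $ j \<noteq> x $ k}"

definition Qpoly :: "(nat \<Rightarrow> complex) \<Rightarrow> nat \<Rightarrow> complex \<Rightarrow> complex" where
  "Qpoly a N z = (\<Prod>i=1..N. (z - a i))"

definition Spoly :: "'g::finite \<Rightarrow> real^'g \<Rightarrow> complex \<Rightarrow> complex" where
  "Spoly j x l = (\<Prod>k\<in>UNIV - {j}. (l - complex_of_real (x $ k)))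
               / (\<Prod>k\<in>UNIV - {j}. complex_of_real (x $ j - x $ k))"

definition P_op :: "real \<Rightarrow> (nat \<Rightarrow> complex) \<Rightarrow> complex \<Rightarrow> (real^'g::finite \<Rightarrow> complex) \<Rightarrow> real^'g \<Rightarrow> complex" where
  "P_op hbar a l f x =
     (\<Prod>i\<in>UNIV. (l - complex_of_real (x $ i))) * f x
     + (\<Sum>j\<in>UNIV. Spoly j x l * Qpoly a (CARD('g) + 1) (complex_of_real (x $ j))
                   * (\<i> * complex_of_real hbar)^2 * pd j (pd j f) x)"

end

theory Submission
  imports Defs "HOL-Complex_Analysis.Cauchy_Integral_Formula"
begin


abbreviation ax :: "'g::finite \<Rightarrow> real^'g" where "ax j \<equiv> axis j 1"

lemma line_has_vd:
  fixes G :: "real^'g::finite \<Rightarrow> complex"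
  assumes "G differentiable at (z + s *\<^sub>R v)"
  shows "((\<lambda>t. G (z + t *\<^sub>R v)) has_vector_derivative frechet_derivative G (at (z + s *\<^sub>R v)) v) (at s)"
proof -
  let ?G' = "frechet_derivative G (at (z + s *\<^sub>R v))"
  have g: "(G has_derivative ?G') (at (z + s *\<^sub>R v))"
    using assms frechet_derivative_works by blast
  have l: "((\<lambda>t. z + t *\<^sub>R v) has_derivative (\<lambda>t. t *\<^sub>R v)) (at s)"
    by (auto intro!: derivative_eq_intros)
  have "((G \<circ> (\<lambda>t. z + t *\<^sub>R v)) has_derivative (?G' \<circ> (\<lambda>t. t *\<^sub>R v))) (at s)"
    by (rule diff_chain_at[OF l]) (simp add: g)
  moreover have "(?G' \<circ> (\<lambda>t. t *\<^sub>R v)) = (\<lambda>t. t *\<^sub>R ?G' v)"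
    using g has_derivative_linear linear_cmul by (metis comp_apply)
  ultimately show ?thesis
    by (simp add: has_vector_derivative_def o_def)
qed

lemma pd_eq:
  fixes G :: "real^'g::finite \<Rightarrow> complex"
  assumes "G differentiable at y"
  shows "pd j G y = frechet_derivative G (at y) (ax j)"
  unfolding pd_def
  using line_has_vd[of G y 0 "ax j"] assms
  by (auto intro: vector_derivative_at)

lemma pd_local:
  fixes G1 G2 :: "real^'g::finite \<Rightarrow> complex"
  assumes "open U" "y \<in> U" "\<And>z. z \<in> U \<Longrightarrow> G1 z = G2 z"
  shows "pd j G1 y = pd j G2 y"
proof -
  obtain e where e: "e > 0" "ball y e \<subseteq> U" using assms openE by blast
  let ?S = "ball (0::real) e"
  have eq: "\<And>t. t \<in> ?S \<Longrightarrow> G1 (y + t *\<^sub>R ax j) = G2 (y + t *\<^sub>R ax j)"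
  proof -
    fix t assume "t \<in> ?S"
    then have "y + t *\<^sub>R ax j \<in> ball y e" by (simp add: dist_norm)
    then show "G1 (y + t *\<^sub>R ax j) = G2 (y + t *\<^sub>R ax j)" using e assms(3) by blast
  qed
  have "\<And>D. ((\<lambda>t. G1 (y + t *\<^sub>R ax j)) has_vector_derivative D) (at 0)
          = ((\<lambda>t. G2 (y + t *\<^sub>R ax j)) has_vector_derivative D) (at 0)"
  proof
    fix D assume "((\<lambda>t. G1 (y + t *\<^sub>R ax j)) has_vector_derivative D) (at 0)"
    then show "((\<lambda>t. G2 (y + t *\<^sub>R ax j)) has_vector_derivative D) (at 0)"
      by (rule has_vector_derivative_transform_within_open[of _ _ _ ?S]) (use e eq in auto)
  next
    fix D assume "((\<lambda>t. G2 (y + t *\<^sub>R ax j)) has_vector_derivative D) (at 0)"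
    then show "((\<lambda>t. G1 (y + t *\<^sub>R ax j)) has_vector_derivative D) (at 0)"
      by (rule has_vector_derivative_transform_within_open[of _ _ _ ?S]) (use e eq in auto)
  qed
  then show ?thesis unfolding pd_def vector_derivative_def by simp
qed

definition J2 :: "(real^'g::finite \<Rightarrow> complex) \<Rightarrow> real^'g \<Rightarrow> 'g \<Rightarrow> complex \<Rightarrow> complex \<Rightarrow> complex \<Rightarrow> bool" where
  "J2 G x j g0 g1 g2 \<longleftrightarrow> G x = g0 \<and> (\<exists>e>0. \<exists>d. (\<forall>s. \<bar>s\<bar> < e \<longrightarrow>
      ((\<lambda>t. G (x + t *\<^sub>R ax j)) has_vector_derivative d s) (at s)) \<and> d 0 = g1 \<and> (d has_vector_derivative g2) (at 0))"

lemma J2_pd: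
  assumes "J2 G x j g0 g1 g2"
  shows "pd j G x = g1" "pd j (pd j G) x = g2"
proof -
  obtain e d where e: "e > 0" and d: "\<And>s. \<bar>s\<bar> < e \<Longrightarrow> ((\<lambda>t. G (x + t *\<^sub>R ax j)) has_vector_derivative d s) (at s)"
    and d0: "d 0 = g1" and d2: "(d has_vector_derivative g2) (at 0)"
    using assms unfolding J2_def by blast
  have pdl: "pd j G (x + s *\<^sub>R ax j) = d s" if "\<bar>s\<bar> < e" for s
  proof -
    have 1: "((\<lambda>t. s + t) has_vector_derivative 1) (at 0)"
      by (auto intro!: derivative_eq_intros)
    have "(((\<lambda>t. G (x + t *\<^sub>R ax j)) \<circ> (\<lambda>t. s + t)) has_vector_derivative 1 *\<^sub>R d s) (at 0)"
      by (rule vector_diff_chain_at[OF 1]) (simp add: d that)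
    then have "((\<lambda>t. G (x + s *\<^sub>R ax j + t *\<^sub>R ax j)) has_vector_derivative d s) (at 0)"
      by (simp add: o_def scaleR_add_left add.assoc)
    then show ?thesis unfolding pd_def by (rule vector_derivative_at)
  qed
  show "pd j G x = g1" using pdl[of 0] e d0 by simp
  have "((\<lambda>t. pd j G (x + t *\<^sub>R ax j)) has_vector_derivative g2) (at 0)"
    by (rule has_vector_derivative_transform_within_open[OF d2, of "ball 0 e"]) (use e pdl in auto)
  then show "pd j (pd j G) x = g2" unfolding pd_def[of j "pd j G"] by (rule vector_derivative_at)
qed


lemma J2_const: "J2 (\<lambda>y. c) x j c 0 0"
  unfolding J2_def by (rule conjI, simp, rule exI[of _ 1]) (auto intro!: exI[of _ "\<lambda>s. 0"] derivative_eq_intros)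

lemma J2_add:
  assumes "J2 u x j u0 u1 u2" "J2 v x j v0 v1 v2"
  shows "J2 (\<lambda>y. u y + v y) x j (u0 + v0) (u1 + v1) (u2 + v2)"
proof -
  obtain e1 d1 where e1: "e1 > 0" and d1: "\<And>s. \<bar>s\<bar> < e1 \<Longrightarrow> ((\<lambda>t. u (x + t *\<^sub>R ax j)) has_vector_derivative d1 s) (at s)"
    and d10: "d1 0 = u1" and d12: "(d1 has_vector_derivative u2) (at 0)" and u0: "u x = u0"
    using assms(1) unfolding J2_def by blast
  obtain e2 d2 where e2: "e2 > 0" and d2: "\<And>s. \<bar>s\<bar> < e2 \<Longrightarrow> ((\<lambda>t. v (x + t *\<^sub>R ax j)) has_vector_derivative d2 s) (at s)"
    and d20: "d2 0 = v1" and d22: "(d2 has_vector_derivative v2) (at 0)" and v0: "v x = v0"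
    using assms(2) unfolding J2_def by blast
  show ?thesis unfolding J2_def
  proof (intro conjI exI[of _ "min e1 e2"] exI[of _ "\<lambda>s. d1 s + d2 s"])
    show "\<forall>s. \<bar>s\<bar> < min e1 e2 \<longrightarrow> ((\<lambda>t. u (x + t *\<^sub>R ax j) + v (x + t *\<^sub>R ax j)) has_vector_derivative d1 s + d2 s) (at s)"
      using d1 d2 by (auto intro!: derivative_eq_intros)
    show "((\<lambda>s. d1 s + d2 s) has_vector_derivative u2 + v2) (at 0)"
      using d12 d22 by (auto intro!: derivative_eq_intros)
  qed (use e1 e2 d10 d20 u0 v0 in auto)
qed

lemma J2_mult:
  assumes "J2 u x j u0 u1 u2" "J2 v x j v0 v1 v2"
  shows "J2 (\<lambda>y. u y * v y) x j (u0 * v0) (u0 * v1 + u1 * v0) (u0 * v2 + 2 * u1 * v1 + u2 * v0)"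
proof -
  obtain e1 d1 where e1: "e1 > 0" and d1: "\<And>s. \<bar>s\<bar> < e1 \<Longrightarrow> ((\<lambda>t. u (x + t *\<^sub>R ax j)) has_vector_derivative d1 s) (at s)"
    and d10: "d1 0 = u1" and d12: "(d1 has_vector_derivative u2) (at 0)" and u0: "u x = u0"
    using assms(1) unfolding J2_def by blast
  obtain e2 d2 where e2: "e2 > 0" and d2: "\<And>s. \<bar>s\<bar> < e2 \<Longrightarrow> ((\<lambda>t. v (x + t *\<^sub>R ax j)) has_vector_derivative d2 s) (at s)"
    and d20: "d2 0 = v1" and d22: "(d2 has_vector_derivative v2) (at 0)" and v0: "v x = v0"
    using assms(2) unfolding J2_def by blast
  let ?U = "\<lambda>t. u (x + t *\<^sub>R ax j)" and ?V = "\<lambda>t. v (x + t *\<^sub>R ax j)"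
  show ?thesis unfolding J2_def
  proof (intro conjI exI[of _ "min e1 e2"] exI[of _ "\<lambda>s. ?U s * d2 s + d1 s * ?V s"])
    show "\<forall>s. \<bar>s\<bar> < min e1 e2 \<longrightarrow> ((\<lambda>t. u (x + t *\<^sub>R ax j) * v (x + t *\<^sub>R ax j)) has_vector_derivative ?U s * d2 s + d1 s * ?V s) (at s)"
      using d1 d2 by (auto intro!: has_vector_derivative_mult)
    have U0: "(?U has_vector_derivative u1) (at 0)" using d1[of 0] e1 d10 by simp
    have V0: "(?V has_vector_derivative v1) (at 0)" using d2[of 0] e2 d20 by simp
    have "((\<lambda>s. ?U s * d2 s + d1 s * ?V s) has_vector_derivative
        (?U 0 * v2 + u1 * d2 0) + (d1 0 * v1 + u2 * ?V 0)) (at 0)"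
      by (intro has_vector_derivative_add has_vector_derivative_mult U0 V0 d12 d22)
    moreover have "(?U 0 * v2 + u1 * d2 0) + (d1 0 * v1 + u2 * ?V 0) = u0 * v2 + 2 * u1 * v1 + u2 * v0"
      using u0 v0 d10 d20 by (simp add: algebra_simps mult_2)
    ultimately show "((\<lambda>s. ?U s * d2 s + d1 s * ?V s) has_vector_derivative u0 * v2 + 2 * u1 * v1 + u2 * v0) (at 0)"
      by simp
  qed (use e1 e2 d10 d20 u0 v0 in auto)
qed

lemma J2_sum:
  assumes "finite K" "\<And>k. k \<in> K \<Longrightarrow> J2 (u k) x j (u0 k) (u1 k) (u2 k)"
  shows "J2 (\<lambda>y. \<Sum>k\<in>K. u k y) x j (\<Sum>k\<in>K. u0 k) (\<Sum>k\<in>K. u1 k) (\<Sum>k\<in>K. u2 k)"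
  using assms
proof (induction K rule: finite_induct)
  case empty
  then show ?case using J2_const[of 0 x j] by simp
next
  case (insert k K)
  then show ?case using J2_add[of "u k" x j "u0 k" "u1 k" "u2 k"] by simp
qed

lemma J2_smooth:
  fixes f :: "real^'g::finite \<Rightarrow> complex"
  assumes "open U" "x \<in> U" "\<And>y. y \<in> U \<Longrightarrow> f differentiable at y"
    "\<And>y. y \<in> U \<Longrightarrow> pd j f differentiable at y"
  shows "J2 f x j (f x) (pd j f x) (pd j (pd j f) x)"
proof -
  obtain e where e: "e > 0" "ball x e \<subseteq> U" using assms openE by blast
  have inU: "x + s *\<^sub>R ax j \<in> U" if "\<bar>s\<bar> < e" for s
    using that e by (auto simp: dist_norm)
  show ?thesis unfolding J2_def
  proof (intro conjI exI[of _ e] exI[of _ "\<lambda>s. pd j f (x + s *\<^sub>R ax j)"] allI impI)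
    fix s assume s: "\<bar>s\<bar> < e"
    show "((\<lambda>t. f (x + t *\<^sub>R ax j)) has_vector_derivative pd j f (x + s *\<^sub>R ax j)) (at s)"
      using line_has_vd[of f x s "ax j"] pd_eq[of f "x + s *\<^sub>R ax j" j] assms(3) inU s by simp
  next
    show "((\<lambda>s. pd j f (x + s *\<^sub>R ax j)) has_vector_derivative pd j (pd j f) x) (at 0)"
      using line_has_vd[of "pd j f" x 0 "ax j"] pd_eq[of "pd j f" x j] assms(4) assms(2) by simp
  qed (use e in auto)
qed

lemma J2_line:
  fixes G :: "real^'g::finite \<Rightarrow> complex" and r :: "complex \<Rightarrow> complex"
  assumes S: "open S" "0 \<in> S" and r: "r holomorphic_on S"
    and eq: "\<And>s. complex_of_real s \<in> S \<Longrightarrow> G (x + s *\<^sub>R ax j) = \<alpha> + \<beta> * r (of_real s)"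
  shows "J2 G x j (G x) (\<beta> * deriv r 0) (\<beta> * deriv (deriv r) 0)"
proof -
  obtain e where e: "e > 0" "ball 0 e \<subseteq> S" using S openE by blast
  have inS: "complex_of_real s \<in> S" if "\<bar>s\<bar> < e" for s
    using that e by (auto simp: dist_norm)
  have r': "deriv r holomorphic_on S" using r S(1) by (rule holomorphic_deriv)
  show ?thesis unfolding J2_def
  proof (intro conjI exI[of _ e] exI[of _ "\<lambda>s. \<beta> * deriv r (of_real s)"] allI impI)
    fix s assume s: "\<bar>s\<bar> < e"
    have "((\<lambda>t. r (of_real t)) has_vector_derivative deriv r (of_real s)) (at s)"
      by (rule has_vector_derivative_real_field) (rule holomorphic_derivI[OF r S(1) inS[OF s]])
    then have "((\<lambda>t. \<alpha> + \<beta> * r (of_real t)) has_vector_derivative \<beta> * deriv r (of_real s)) (at s)"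
      by (auto intro!: derivative_eq_intros)
    then show "((\<lambda>t. G (x + t *\<^sub>R ax j)) has_vector_derivative \<beta> * deriv r (of_real s)) (at s)"
      by (rule has_vector_derivative_transform_within_open[of _ _ _ "ball 0 e"])
         (use s inS eq in \<open>auto simp: dist_norm\<close>)
  next
    have "((\<lambda>t. deriv r (of_real t)) has_vector_derivative deriv (deriv r) (of_real 0)) (at 0)"
      by (rule has_vector_derivative_real_field) (rule holomorphic_derivI[OF r' S(1)], simp add: S)
    then show "((\<lambda>s. \<beta> * deriv r (of_real s)) has_vector_derivative \<beta> * deriv (deriv r) 0) (at 0)"
      by (auto intro!: derivative_eq_intros)
  qed (use e in auto)
qed


lemma schwarz_aux:
  fixes h :: "real^'g::finite \<Rightarrow> complex"
  assumes ab: "a \<noteq> b" and r: "r > 0" and dh: "\<And>y. y \<in> ball x r \<Longrightarrow> h differentiable at y"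
    and da: "(pd a h has_derivative Da) (at x)" and eps: "\<epsilon> > 0"
  shows "\<exists>\<delta>>0. \<forall>t. 0 < t \<and> t < \<delta> \<longrightarrow>
    norm (h (x + t *\<^sub>R ax b + t *\<^sub>R ax a) - h (x + t *\<^sub>R ax a) - h (x + t *\<^sub>R ax b) + h x
          - (t * t) *\<^sub>R Da (ax b)) \<le> 3 * \<epsilon> * (t * t)"
proof -
  have bl: "bounded_linear Da" using da has_derivative_bounded_linear by blast
  obtain d0 where d0: "d0 > 0" and d0e: "\<And>y. norm (y - x) < d0 \<Longrightarrow>
      norm (pd a h y - pd a h x - Da (y - x)) \<le> \<epsilon> * norm (y - x)"
    using da eps unfolding has_derivative_at_alt by blast
  define \<delta> where "\<delta> = min (d0/2) (r/2)"
  have "\<delta> > 0" using d0 r by (simp add: \<delta>_def)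
  moreover have "norm (h (x + t *\<^sub>R ax b + t *\<^sub>R ax a) - h (x + t *\<^sub>R ax a) - h (x + t *\<^sub>R ax b) + h x
          - (t * t) *\<^sub>R Da (ax b)) \<le> 3 * \<epsilon> * (t * t)" if t: "0 < t" "t < \<delta>" for t
  proof -
    let ?C = "Da (ax b)"
    define z where "z = x + t *\<^sub>R ax b"
    define F where "F s = h (z + s *\<^sub>R ax a) - h (x + s *\<^sub>R ax a) - (s * t) *\<^sub>R ?C" for s
    define F' where "F' s = pd a h (z + s *\<^sub>R ax a) - pd a h (x + s *\<^sub>R ax a) - t *\<^sub>R ?C" for s
    have n1: "norm (t *\<^sub>R ax b + s *\<^sub>R ax a) \<le> t + s" if "0 \<le> s" for s
      using norm_triangle_ineq[of "t *\<^sub>R ax b" "s *\<^sub>R ax a"] that t by simp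
    have inb: "z + s *\<^sub>R ax a \<in> ball x r" "x + s *\<^sub>R ax a \<in> ball x r" if "0 \<le> s" "s \<le> t" for s
    proof -
      have "dist x (z + s *\<^sub>R ax a) = norm ((z + s *\<^sub>R ax a) - x)" by (simp add: dist_norm norm_minus_commute)
      also have "(z + s *\<^sub>R ax a) - x = t *\<^sub>R ax b + s *\<^sub>R ax a" by (simp add: z_def)
      finally show "z + s *\<^sub>R ax a \<in> ball x r"
        using n1[of s] that t unfolding \<delta>_def by simp
      show "x + s *\<^sub>R ax a \<in> ball x r"
        using that t unfolding \<delta>_def by (simp add: dist_norm)
    qed
    have Fd: "(F has_vector_derivative F' s) (at s)" if "0 \<le> s" "s \<le> t" for s
    proof -
      have 1: "((\<lambda>s. h (z + s *\<^sub>R ax a)) has_vector_derivative pd a h (z + s *\<^sub>R ax a)) (at s)"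
        using line_has_vd[of h z s "ax a"] pd_eq[of h "z + s *\<^sub>R ax a" a] dh inb[OF that] by simp
      have 2: "((\<lambda>s. h (x + s *\<^sub>R ax a)) has_vector_derivative pd a h (x + s *\<^sub>R ax a)) (at s)"
        using line_has_vd[of h x s "ax a"] pd_eq[of h "x + s *\<^sub>R ax a" a] dh inb[OF that] by simp
      have 3: "((\<lambda>s. (s * t) *\<^sub>R ?C) has_vector_derivative t *\<^sub>R ?C) (at s)"
        by (auto intro!: derivative_eq_intros)
      show ?thesis unfolding F_def F'_def
        by (intro has_vector_derivative_diff 1 2 3)
    qed
    have cont: "continuous_on {0..t} F"
      using Fd by (auto intro!: continuous_at_imp_continuous_on has_vector_derivative_continuous)
    have bnd: "norm (F' s) \<le> 3 * \<epsilon> * t" if "0 < s" "s < t" for s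
    proof -
      define v1 where "v1 = t *\<^sub>R ax b + s *\<^sub>R ax a"
      define v2 where "v2 = s *\<^sub>R ax a"
      have nv1: "norm v1 \<le> 2 * t" using n1[of s] that unfolding v1_def by simp
      have nv2: "norm v2 = s" using that unfolding v2_def by simp
      have E1: "norm (pd a h (x + v1) - pd a h x - Da v1) \<le> \<epsilon> * norm v1"
        using d0e[of "x + v1"] nv1 t unfolding \<delta>_def by simp
      have E2: "norm (pd a h (x + v2) - pd a h x - Da v2) \<le> \<epsilon> * norm v2"
        using d0e[of "x + v2"] nv2 t that unfolding \<delta>_def by simp
      have lin: "Da v1 - Da v2 = t *\<^sub>R ?C"
      proof -
        have L: "linear Da" using bounded_linear.linear[OF bl] .
        show ?thesis unfolding v1_def v2_def linear_add[OF L] linear_cmul[OF L] by simp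
      qed
      have "F' s = (pd a h (x + v1) - pd a h x - Da v1) - (pd a h (x + v2) - pd a h x - Da v2)"
        unfolding F'_def z_def v1_def v2_def using lin[unfolded v1_def v2_def]
        by (simp add: algebra_simps)
      then have "norm (F' s) \<le> norm (pd a h (x + v1) - pd a h x - Da v1) + norm (pd a h (x + v2) - pd a h x - Da v2)"
        by (metis norm_triangle_ineq4)
      then have "norm (F' s) \<le> \<epsilon> * norm v1 + \<epsilon> * norm v2"
        using E1 E2 by linarith
      also have "\<dots> \<le> \<epsilon> * (2 * t) + \<epsilon> * t"
        using nv1 nv2 that eps by (intro add_mono mult_left_mono) auto
      finally show ?thesis by simp
    qed
    have "norm (F t - F 0) \<le> (3 * \<epsilon> * t) * t - (3 * \<epsilon> * t) * 0"
    proof (rule differentiable_bound_general[of 0 t F "\<lambda>s. (3 * \<epsilon> * t) * s" F' "\<lambda>s. 3 * \<epsilon> * t"])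
      show "\<And>s. 0 < s \<Longrightarrow> s < t \<Longrightarrow> ((\<lambda>s. 3 * \<epsilon> * t * s) has_vector_derivative 3 * \<epsilon> * t) (at s)"
        by (auto intro!: derivative_eq_intros)
    qed (use t cont Fd bnd in \<open>auto intro!: continuous_intros\<close>)
    moreover have "F t - F 0 = h (x + t *\<^sub>R ax b + t *\<^sub>R ax a) - h (x + t *\<^sub>R ax a) - h (x + t *\<^sub>R ax b) + h x
          - (t * t) *\<^sub>R ?C"
      unfolding F_def z_def by simp
    ultimately show ?thesis by (simp add: mult.commute mult.left_commute)
  qed
  ultimately show ?thesis by blast
qed

lemma schwarz:
  fixes h :: "real^'g::finite \<Rightarrow> complex"
  assumes r: "r > 0" and dh: "\<And>y. y \<in> ball x r \<Longrightarrow> h differentiable at y"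
    and da: "pd a h differentiable at x" and db: "pd b h differentiable at x"
  shows "pd b (pd a h) x = pd a (pd b h) x"
proof (cases "a = b")
  case True then show ?thesis by simp
next
  case False
  define Da where "Da = frechet_derivative (pd a h) (at x)"
  define Db where "Db = frechet_derivative (pd b h) (at x)"
  have Da: "(pd a h has_derivative Da) (at x)" using da frechet_derivative_works Da_def by blast
  have Db: "(pd b h has_derivative Db) (at x)" using db frechet_derivative_works Db_def by blast
  have e1: "pd b (pd a h) x = Da (ax b)" using pd_eq[OF da] Da_def by simp
  have e2: "pd a (pd b h) x = Db (ax a)" using pd_eq[OF db] Db_def by simp
  show ?thesis
  proof (rule ccontr)
    assume ne: "pd b (pd a h) x \<noteq> pd a (pd b h) x"
    define n where "n = norm (Da (ax b) - Db (ax a))"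
    have n: "n > 0" using ne e1 e2 n_def by simp
    define \<epsilon> where "\<epsilon> = n / 12"
    have eps: "\<epsilon> > 0" using n \<epsilon>_def by simp
    obtain \<delta>1 where d1: "\<delta>1 > 0" and b1: "\<And>t. 0 < t \<Longrightarrow> t < \<delta>1 \<Longrightarrow>
      norm (h (x + t *\<^sub>R ax b + t *\<^sub>R ax a) - h (x + t *\<^sub>R ax a) - h (x + t *\<^sub>R ax b) + h x
          - (t * t) *\<^sub>R Da (ax b)) \<le> 3 * \<epsilon> * (t * t)"
      using schwarz_aux[OF False r dh Da eps] by blast
    obtain \<delta>2 where d2: "\<delta>2 > 0" and b2: "\<And>t. 0 < t \<Longrightarrow> t < \<delta>2 \<Longrightarrow>
      norm (h (x + t *\<^sub>R ax a + t *\<^sub>R ax b) - h (x + t *\<^sub>R ax b) - h (x + t *\<^sub>R ax a) + h x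
          - (t * t) *\<^sub>R Db (ax a)) \<le> 3 * \<epsilon> * (t * t)"
      using schwarz_aux[of b a, OF _ r dh Db eps] False by blast
    define t where "t = min \<delta>1 \<delta>2 / 2"
    have t: "0 < t" "t < \<delta>1" "t < \<delta>2" using d1 d2 t_def by auto
    define X where "X = h (x + t *\<^sub>R ax b + t *\<^sub>R ax a) - h (x + t *\<^sub>R ax a) - h (x + t *\<^sub>R ax b) + h x"
    have X2: "h (x + t *\<^sub>R ax a + t *\<^sub>R ax b) - h (x + t *\<^sub>R ax b) - h (x + t *\<^sub>R ax a) + h x = X"
      unfolding X_def by (simp add: algebra_simps)
    have B1: "norm (X - (t * t) *\<^sub>R Da (ax b)) \<le> 3 * \<epsilon> * (t * t)" using b1[OF t(1,2)] X_def by simp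
    have B2: "norm (X - (t * t) *\<^sub>R Db (ax a)) \<le> 3 * \<epsilon> * (t * t)" using b2[OF t(1,3)] X2 by simp
    have "(t * t) *\<^sub>R (Da (ax b) - Db (ax a)) = (X - (t * t) *\<^sub>R Db (ax a)) - (X - (t * t) *\<^sub>R Da (ax b))"
      by (simp add: algebra_simps)
    then have L: "norm ((t * t) *\<^sub>R (Da (ax b) - Db (ax a))) \<le> 6 * \<epsilon> * (t * t)"
      using B1 B2 norm_triangle_ineq4[of "X - (t * t) *\<^sub>R Db (ax a)" "X - (t * t) *\<^sub>R Da (ax b)"] by simp
    have R: "norm ((t * t) *\<^sub>R (Da (ax b) - Db (ax a))) = (t * t) * n"
      unfolding n_def norm_scaleR using t by simp
    have E: "6 * \<epsilon> * (t * t) = (t * t) * n / 2" by (simp add: \<epsilon>_def)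
    have P: "(t * t) * n > 0" using t n by simp
    show False using L R E P by linarith
  qed
qed


lemma iter_pd_append: "iter_pd (js @ [j]) f = iter_pd js (pd j f)"
  by (induction js) auto

lemma smooth_pd: "smooth_on U f \<Longrightarrow> smooth_on U (pd j f)"
  unfolding smooth_on_def
proof (intro allI ballI)
  fix js x assume "\<forall>js. \<forall>x\<in>U. iter_pd js f differentiable at x" "x \<in> U"
  then have "iter_pd (js @ [j]) f differentiable at x" by blast
  then show "iter_pd js (pd j f) differentiable at x" by (simp add: iter_pd_append)
qed

lemma smooth_diff: "smooth_on U f \<Longrightarrow> y \<in> U \<Longrightarrow> f differentiable at y"
  unfolding smooth_on_def by (metis iter_pd.simps(1))

lemma open_dc: "open (distinct_coords :: (real^'g::finite) set)"
proof -
  have eq: "(distinct_coords :: (real^'g) set) = (\<Inter>p\<in>{p::'g\<times>'g. fst p \<noteq> snd p}. {x. x $ fst p \<noteq> x $ snd p})"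
    unfolding distinct_coords_def by auto
  show ?thesis unfolding eq
  proof (rule open_INT)
    show "finite {p::'g\<times>'g. fst p \<noteq> snd p}" by simp
    show "\<forall>p\<in>{p::'g\<times>'g. fst p \<noteq> snd p}. open {x::real^'g. x $ fst p \<noteq> x $ snd p}"
      by (intro ballI open_Collect_neq continuous_intros)
  qed
qed

lemma sch_smooth:
  assumes "smooth_on distinct_coords h" "y \<in> distinct_coords"
  shows "pd b (pd a h) y = pd a (pd b h) y"
proof -
  obtain e where e: "e > 0" "ball y e \<subseteq> distinct_coords" using open_dc assms(2) openE by blast
  show ?thesis
  proof (rule schwarz[OF e(1)])
    show "\<And>z. z \<in> ball y e \<Longrightarrow> h differentiable at z" using smooth_diff[OF assms(1)] e(2) by blast
    show "pd a h differentiable at y" by (rule smooth_diff[OF smooth_pd[OF assms(1)] assms(2)])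
    show "pd b h differentiable at y" by (rule smooth_diff[OF smooth_pd[OF assms(1)] assms(2)])
  qed
qed

lemma pd4:
  fixes f :: "real^'g::finite \<Rightarrow> complex"
  assumes f: "smooth_on distinct_coords f" and x: "x \<in> distinct_coords"
  shows "pd j (pd j (pd k (pd k f))) x = pd k (pd k (pd j (pd j f))) x"
proof -
  note sp = smooth_pd
  have "pd j (pd j (pd k (pd k f))) x = pd j (pd k (pd j (pd k f))) x"
    by (rule pd_local[OF open_dc x]) (rule sch_smooth[OF sp[OF f]])
  also have "\<dots> = pd k (pd j (pd j (pd k f))) x"
    by (rule sch_smooth[OF sp[OF sp[OF f]] x])
  also have "\<dots> = pd k (pd j (pd k (pd j f))) x"
  proof (rule pd_local[OF open_dc x])
    fix z :: "real^'g" assume z: "z \<in> distinct_coords"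
    show "pd j (pd j (pd k f)) z = pd j (pd k (pd j f)) z"
      by (rule pd_local[OF open_dc z]) (rule sch_smooth[OF f])
  qed
  also have "\<dots> = pd k (pd k (pd j (pd j f))) x"
    by (rule pd_local[OF open_dc x]) (rule sch_smooth[OF sp[OF f]])
  finally show ?thesis .
qed



definition TT :: "complex \<Rightarrow> complex \<Rightarrow> complex \<Rightarrow> ('g::finite \<Rightarrow> complex) \<Rightarrow> ('g \<Rightarrow> complex)
   \<Rightarrow> ('g \<Rightarrow> 'g \<Rightarrow> complex) \<Rightarrow> ('g \<Rightarrow> 'g \<Rightarrow> complex) \<Rightarrow> ('g \<Rightarrow> 'g \<Rightarrow> complex) \<Rightarrow> ('g \<Rightarrow> 'g \<Rightarrow> complex)
   \<Rightarrow> complex \<Rightarrow> ('g \<Rightarrow> complex) \<Rightarrow> ('g \<Rightarrow> complex) \<Rightarrow> ('g \<Rightarrow> 'g \<Rightarrow> complex)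
   \<Rightarrow> complex \<Rightarrow> ('g \<Rightarrow> complex) \<Rightarrow> ('g \<Rightarrow> complex) \<Rightarrow> ('g \<Rightarrow> 'g \<Rightarrow> complex) \<Rightarrow> complex" where
  "TT \<rho>1 \<rho>2 f0 f1 Fv F3 F4 h1 h2 \<pi>a Ba Ma \<beta>a \<pi>b Bb Mb \<beta>b =
    \<pi>a * (\<pi>b * f0 + (\<Sum>k\<in>UNIV. Bb k * Fv k)) +
    (\<Sum>j\<in>UNIV. Ba j * ((\<pi>b * Fv j + 2 * (Mb j * \<rho>1) * f1 j + (Mb j * \<rho>2) * f0) +
        (\<Sum>k\<in>UNIV. Bb k * F4 j k + 2 * (\<beta>b j k * h1 j k) * F3 j k + (\<beta>b j k * h2 j k) * Fv k)))"

lemma TT_expand: "TT \<rho>1 \<rho>2 f0 f1 Fv F3 F4 h1 h2 \<pi>a Ba Ma \<beta>a \<pi>b Bb Mb \<beta>b =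
   \<pi>a * \<pi>b * f0 + (\<Sum>k\<in>UNIV. (\<pi>a * Bb k + Ba k * \<pi>b) * Fv k)
   + (\<Sum>j\<in>UNIV. (Ba j * Mb j) * (2 * \<rho>1 * f1 j + \<rho>2 * f0))
   + (\<Sum>j\<in>UNIV. \<Sum>k\<in>UNIV. (Ba j * \<beta>b j k) * (2 * h1 j k * F3 j k + h2 j k * Fv k))
   + (\<Sum>j\<in>UNIV. \<Sum>k\<in>UNIV. Ba j * Bb k * F4 j k)"
  unfolding TT_def
  by (simp add: sum_distrib_left sum.distrib algebra_simps)

lemma TT_sym:
  assumes H1: "\<And>j. Ba j * Mb j = Bb j * Ma j"
    and H2: "\<And>j k. Ba j * \<beta>b j k = Bb j * \<beta>a j k"
    and H3: "\<And>j k. F4 j k = F4 k j"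
  shows "TT \<rho>1 \<rho>2 f0 f1 Fv F3 F4 h1 h2 \<pi>a Ba Ma \<beta>a \<pi>b Bb Mb \<beta>b =
         TT \<rho>1 \<rho>2 f0 f1 Fv F3 F4 h1 h2 \<pi>b Bb Mb \<beta>b \<pi>a Ba Ma \<beta>a"
proof -
  have 1: "(\<Sum>k\<in>UNIV. (\<pi>a * Bb k + Ba k * \<pi>b) * Fv k) = (\<Sum>k\<in>UNIV. (\<pi>b * Ba k + Bb k * \<pi>a) * Fv k)"
    by (simp add: algebra_simps)
  have 2: "(\<Sum>j\<in>UNIV. (Ba j * Mb j) * (2 * \<rho>1 * f1 j + \<rho>2 * f0)) = (\<Sum>j\<in>UNIV. (Bb j * Ma j) * (2 * \<rho>1 * f1 j + \<rho>2 * f0))"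
    using H1 by simp
  have 3: "(\<Sum>j\<in>UNIV. \<Sum>k\<in>UNIV. (Ba j * \<beta>b j k) * (2 * h1 j k * F3 j k + h2 j k * Fv k))
     = (\<Sum>j\<in>UNIV. \<Sum>k\<in>UNIV. (Bb j * \<beta>a j k) * (2 * h1 j k * F3 j k + h2 j k * Fv k))"
    using H2 by simp
  have 4: "(\<Sum>j\<in>UNIV. \<Sum>k\<in>UNIV. Ba j * Bb k * F4 j k) = (\<Sum>j\<in>UNIV. \<Sum>k\<in>UNIV. Bb j * Ba k * F4 j k)"
    by (subst sum.swap) (simp add: H3 mult.commute)
  show ?thesis unfolding TT_expand 1 2 3 4 by (simp add: mult.commute)
qed


definition Mf :: "real^'g::finite \<Rightarrow> 'g \<Rightarrow> complex \<Rightarrow> complex" where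
  "Mf x j l = (\<Prod>i\<in>UNIV - {j}. (l - complex_of_real (x $ i)))"
definition pif :: "complex \<Rightarrow> real^'g::finite \<Rightarrow> complex" where
  "pif l y = (\<Prod>i\<in>UNIV. (l - complex_of_real (y $ i)))"
definition Bc :: "real \<Rightarrow> (nat \<Rightarrow> complex) \<Rightarrow> complex \<Rightarrow> 'g::finite \<Rightarrow> real^'g \<Rightarrow> complex" where
  "Bc hbar a l k y = Spoly k y l * Qpoly a (CARD('g) + 1) (complex_of_real (y $ k)) * (\<i> * complex_of_real hbar)^2"
definition Rf :: "real^'g::finite \<Rightarrow> 'g \<Rightarrow> 'g \<Rightarrow> complex \<Rightarrow> complex" where
  "Rf x j k l = (\<Prod>m\<in>{m. m \<noteq> j \<and> m \<noteq> k}. (l - complex_of_real (x $ m)))"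
definition Dd :: "real^'g::finite \<Rightarrow> 'g \<Rightarrow> 'g \<Rightarrow> complex" where
  "Dd x j k = (\<Prod>m\<in>{m. m \<noteq> j \<and> m \<noteq> k}. complex_of_real (x $ k - x $ m))"
definition betaf :: "real \<Rightarrow> (nat \<Rightarrow> complex) \<Rightarrow> real^'g::finite \<Rightarrow> 'g \<Rightarrow> 'g \<Rightarrow> complex \<Rightarrow> complex" where
  "betaf hbar a x j k l = (if k = j then Mf x j l else
     Rf x j k l / Dd x j k * (l - complex_of_real (x $ k)) * Qpoly a (CARD('g) + 1) (complex_of_real (x $ k))
       * (\<i> * complex_of_real hbar)^2)"
definition rr :: "real \<Rightarrow> (nat \<Rightarrow> complex) \<Rightarrow> real^'g::finite \<Rightarrow> 'g \<Rightarrow> 'g \<Rightarrow> complex \<Rightarrow> complex" where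
  "rr hbar a x j k = (if k = j then
     (\<lambda>z. Qpoly a (CARD('g) + 1) (complex_of_real (x $ j) + z)
          / (\<Prod>m\<in>UNIV - {j}. (complex_of_real (x $ j - x $ m) + z)) * (\<i> * complex_of_real hbar)^2)
     else (\<lambda>z. 1 / (complex_of_real (x $ k - x $ j) - z)))"

lemma line_coord: "(x + s *\<^sub>R ax j) $ i = (if i = j then x $ i + s else x $ i)"
  by (simp add: axis_def)

lemma line_pi: "J2 (pif l) x j (pif l x) (Mf x j l * deriv (\<lambda>z. - z) 0) (Mf x j l * deriv (deriv (\<lambda>z. - z)) 0)"
proof (rule J2_line[of UNIV])
  fix s :: real
  have "pif l (x + s *\<^sub>R ax j) = (l - complex_of_real (x $ j + s)) * (\<Prod>i\<in>UNIV - {j}. (l - complex_of_real ((x + s *\<^sub>R ax j) $ i)))"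
    unfolding pif_def by (subst prod.remove[of UNIV j]) (auto simp: line_coord)
  also have "(\<Prod>i\<in>UNIV - {j}. (l - complex_of_real ((x + s *\<^sub>R ax j) $ i))) = Mf x j l"
    unfolding Mf_def by (rule prod.cong) (auto simp: axis_def)
  finally have 1: "pif l (x + s *\<^sub>R ax j) = (l - complex_of_real (x $ j + s)) * Mf x j l" .
  have 2: "pif l x = (l - complex_of_real (x $ j)) * Mf x j l"
    unfolding pif_def Mf_def by (subst prod.remove[of UNIV j]) auto
  show "pif l (x + s *\<^sub>R ax j) = pif l x + Mf x j l * - complex_of_real s"
    unfolding 1 2 by (simp add: algebra_simps)
next
  show "(\<lambda>z. - z) holomorphic_on UNIV" using holomorphic_on_minus[OF holomorphic_on_ident] by simp
qed auto


lemma alg1: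
  fixes l xj xk s R D Q c :: complex
  assumes "xk - xj - s \<noteq> 0" "D \<noteq> 0"
  shows "(l - (xj + s)) * R / ((xk - xj - s) * D) * Q * c
       = R / D * Q * c + R / D * (l - xk) * Q * c * (1 / (xk - xj - s))"
proof -
  have gen: "\<And>p q. p \<noteq> 0 \<Longrightarrow> (p + q) * R / (p * D) * Q * c = R / D * Q * c + R / D * q * Q * c * (1 / p)"
    using assms(2) by (simp add: field_simps)
  have h: "l - (xj + s) = (xk - xj - s) + (l - xk)" by simp
  show ?thesis by (subst h) (rule gen[OF assms(1)])
qed

lemma dc_ne: "x \<in> distinct_coords \<Longrightarrow> j \<noteq> k \<Longrightarrow> x $ j \<noteq> x $ k"
  unfolding distinct_coords_def by auto

lemma line_B_ne:
  fixes x :: "real^'g::finite"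
  assumes x: "x \<in> distinct_coords" and jk: "k \<noteq> j"
  shows "J2 (Bc hbar a l k) x j (Bc hbar a l k x) (betaf hbar a x j k l * deriv (rr hbar a x j k) 0)
           (betaf hbar a x j k l * deriv (deriv (rr hbar a x j k)) 0)"
proof -
  let ?p = "complex_of_real (x $ k - x $ j)"
  let ?Q = "Qpoly a (CARD('g) + 1) (complex_of_real (x $ k))"
  let ?c = "(\<i> * complex_of_real hbar)^2"
  have rr: "rr hbar a x j k = (\<lambda>z. 1 / (?p - z))" unfolding rr_def using jk by simp
  have be: "betaf hbar a x j k l = Rf x j k l / Dd x j k * (l - complex_of_real (x $ k)) * ?Q * ?c"
    unfolding betaf_def using jk by simp
  have D0: "Dd x j k \<noteq> 0" unfolding Dd_def using dc_ne[OF x] by (auto simp: prod_zero_iff)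
  show ?thesis unfolding rr be
  proof (rule J2_line[of "- {?p}" _ _ _ _ "Rf x j k l / Dd x j k * ?Q * ?c"])
    show "open (- {?p})" by auto
    show "0 \<in> - {?p}" using dc_ne[OF x jk] by simp
    show "(\<lambda>z. 1 / (?p - z)) holomorphic_on - {?p}" by (auto intro!: holomorphic_intros)
  next
    fix s :: real assume s: "complex_of_real s \<in> - {?p}"
    have num: "(\<Prod>m\<in>UNIV - {k}. (l - complex_of_real ((x + s *\<^sub>R ax j) $ m)))
        = (l - (complex_of_real (x $ j) + complex_of_real s)) * Rf x j k l"
      unfolding Rf_def using jk
      by (subst prod.remove[of _ j]) (auto simp: axis_def intro!: prod.cong)
    have den: "(\<Prod>m\<in>UNIV - {k}. complex_of_real ((x + s *\<^sub>R ax j) $ k - (x + s *\<^sub>R ax j) $ m))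
        = (complex_of_real (x $ k) - complex_of_real (x $ j) - complex_of_real s) * Dd x j k"
    proof -
      have se: "UNIV - {k} - {j} = {m. m \<noteq> j \<and> m \<noteq> k}" by auto
      show ?thesis
        unfolding Dd_def using jk
        by (subst prod.remove[of _ j]) (auto simp: axis_def se intro!: prod.cong)
    qed
    have Qe: "Qpoly a (CARD('g) + 1) (complex_of_real ((x + s *\<^sub>R ax j) $ k)) = ?Q"
      using jk by (simp add: axis_def)
    have ne: "complex_of_real (x $ k) - complex_of_real (x $ j) - complex_of_real s \<noteq> 0"
      using s by auto
    show "Bc hbar a l k (x + s *\<^sub>R ax j) = Rf x j k l / Dd x j k * ?Q * ?c +
        Rf x j k l / Dd x j k * (l - complex_of_real (x $ k)) * ?Q * ?c * (1 / (?p - complex_of_real s))"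
      unfolding Bc_def Spoly_def num den Qe using alg1[OF ne D0] by simp
  qed
qed


lemma line_B_eq:
  fixes x :: "real^'g::finite"
  assumes x: "x \<in> distinct_coords"
  shows "J2 (Bc hbar a l j) x j (Bc hbar a l j x) (betaf hbar a x j j l * deriv (rr hbar a x j j) 0)
           (betaf hbar a x j j l * deriv (deriv (rr hbar a x j j)) 0)"
proof -
  let ?c = "(\<i> * complex_of_real hbar)^2"
  let ?den = "\<lambda>z. (\<Prod>m\<in>UNIV - {j}. (complex_of_real (x $ j - x $ m) + z))"
  let ?r = "\<lambda>z. Qpoly a (CARD('g) + 1) (complex_of_real (x $ j) + z) / ?den z * ?c"
  let ?S = "{z. ?den z \<noteq> 0}"
  have rr: "rr hbar a x j j = ?r" unfolding rr_def by simp
  have be: "betaf hbar a x j j l = Mf x j l" unfolding betaf_def by simp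
  show ?thesis unfolding rr be
  proof (rule J2_line[of ?S _ _ _ _ 0])
    show "open ?S" by (rule open_Collect_neq) (auto intro!: continuous_intros)
    show "0 \<in> ?S" using dc_ne[OF x] by (auto simp: prod_zero_iff)
    show "?r holomorphic_on ?S" unfolding Qpoly_def by (auto intro!: holomorphic_intros)
  next
    fix s :: real
    have num: "(\<Prod>m\<in>UNIV - {j}. (l - complex_of_real ((x + s *\<^sub>R ax j) $ m))) = Mf x j l"
      unfolding Mf_def by (auto simp: axis_def intro!: prod.cong)
    have den: "(\<Prod>m\<in>UNIV - {j}. complex_of_real ((x + s *\<^sub>R ax j) $ j - (x + s *\<^sub>R ax j) $ m))
        = ?den (complex_of_real s)"
      by (auto simp: axis_def intro!: prod.cong)
    have Qe: "Qpoly a (CARD('g) + 1) (complex_of_real ((x + s *\<^sub>R ax j) $ j))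
        = Qpoly a (CARD('g) + 1) (complex_of_real (x $ j) + complex_of_real s)"
      by (simp add: axis_def)
    show "Bc hbar a l j (x + s *\<^sub>R ax j) = 0 + Mf x j l * ?r (complex_of_real s)"
      unfolding Bc_def Spoly_def num den Qe by simp
  qed
qed

lemma line_B:
  fixes x :: "real^'g::finite"
  assumes x: "x \<in> distinct_coords"
  shows "J2 (Bc hbar a l k) x j (Bc hbar a l k x) (betaf hbar a x j k l * deriv (rr hbar a x j k) 0)
           (betaf hbar a x j k l * deriv (deriv (rr hbar a x j k)) 0)"
  using line_B_eq[OF x] line_B_ne[OF x] by (cases "k = j") auto


lemma Bc_M: "Bc hbar a l j x = Mf x j l / (\<Prod>k\<in>UNIV - {j}. complex_of_real (x $ j - x $ k))
     * Qpoly a (CARD('g) + 1) (complex_of_real (x $ j)) * (\<i> * complex_of_real hbar)^2"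
  for x :: "real^'g::finite"
  unfolding Bc_def Spoly_def Mf_def by simp

lemma H1: "Bc hbar a l j x * Mf x j l' = Bc hbar a l' j x * Mf x j l"
  unfolding Bc_M by (simp add: divide_inverse ac_simps)

lemma M_R: "k \<noteq> j \<Longrightarrow> Mf x j l = (l - complex_of_real (x $ k)) * Rf x j k l"
proof -
  assume kj: "k \<noteq> j"
  have se: "UNIV - {j} - {k} = {m. m \<noteq> j \<and> m \<noteq> k}" by auto
  show ?thesis unfolding Mf_def Rf_def using kj
    by (subst prod.remove[of _ k]) (auto simp: se)
qed

lemma Rf_sym: "Rf x j k l = Rf x k j l"
  unfolding Rf_def by (rule prod.cong) auto

lemma H2: "Bc hbar a l j x * betaf hbar a x j k l' = Bc hbar a l' j x * betaf hbar a x j k l"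
proof (cases "k = j")
  case True
  then show ?thesis unfolding betaf_def using H1 by simp
next
  case False
  show ?thesis unfolding betaf_def Bc_M using False M_R[OF False, of x l] M_R[OF False, of x l']
    by (simp add: divide_inverse ac_simps)
qed


lemma P_op_eq: "P_op hbar a l g = (\<lambda>y. pif l y * g y + (\<Sum>k\<in>UNIV. Bc hbar a l k y * pd k (pd k g) y))"
  by (rule ext) (simp add: P_op_def pif_def Bc_def)

lemma pdpd_P:
  fixes f :: "real^'g::finite \<Rightarrow> complex"
  assumes f: "smooth_on distinct_coords f" and x: "x \<in> distinct_coords"
  shows "pd j (pd j (P_op hbar a l f)) x =
     (pif l x * pd j (pd j f) x + 2 * (Mf x j l * deriv (\<lambda>z. - z) 0) * pd j f x
        + (Mf x j l * deriv (deriv (\<lambda>z. - z)) 0) * f x) +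
     (\<Sum>k\<in>UNIV. Bc hbar a l k x * pd j (pd j (pd k (pd k f))) x
        + 2 * (betaf hbar a x j k l * deriv (rr hbar a x j k) 0) * pd j (pd k (pd k f)) x
        + (betaf hbar a x j k l * deriv (deriv (rr hbar a x j k)) 0) * pd k (pd k f) x)"
proof -
  have sm: "\<And>h. smooth_on distinct_coords h \<Longrightarrow> J2 h x j (h x) (pd j h x) (pd j (pd j h) x)"
    by (rule J2_smooth[OF open_dc x]) (blast intro: smooth_diff smooth_pd)+
  have Jf: "J2 f x j (f x) (pd j f x) (pd j (pd j f) x)" by (rule sm[OF f])
  have JF: "\<And>k. J2 (pd k (pd k f)) x j (pd k (pd k f) x) (pd j (pd k (pd k f)) x) (pd j (pd j (pd k (pd k f))) x)"
    by (rule sm) (intro smooth_pd f)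
  have J: "J2 (P_op hbar a l f) x j
     (pif l x * f x + (\<Sum>k\<in>UNIV. Bc hbar a l k x * pd k (pd k f) x))
     (pif l x * pd j f x + Mf x j l * deriv (\<lambda>z. - z) 0 * f x +
        (\<Sum>k\<in>UNIV. Bc hbar a l k x * pd j (pd k (pd k f)) x + betaf hbar a x j k l * deriv (rr hbar a x j k) 0 * pd k (pd k f) x))
     ((pif l x * pd j (pd j f) x + 2 * (Mf x j l * deriv (\<lambda>z. - z) 0) * pd j f x
        + (Mf x j l * deriv (deriv (\<lambda>z. - z)) 0) * f x) +
     (\<Sum>k\<in>UNIV. Bc hbar a l k x * pd j (pd j (pd k (pd k f))) x
        + 2 * (betaf hbar a x j k l * deriv (rr hbar a x j k) 0) * pd j (pd k (pd k f)) x
        + (betaf hbar a x j k l * deriv (deriv (rr hbar a x j k)) 0) * pd k (pd k f) x))"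
    unfolding P_op_eq
    by (intro J2_add J2_mult J2_sum line_pi line_B x Jf JF) simp
  show ?thesis using J2_pd(2)[OF J] .
qed

theorem mainTheorem5:
  fixes hbar :: real and a :: "nat \<Rightarrow> complex" and l l' :: complex
    and f :: "real^'g::finite \<Rightarrow> complex"
  assumes "smooth_on distinct_coords f"
  shows "\<forall>x\<in>distinct_coords.
           P_op hbar a l (P_op hbar a l' f) x = P_op hbar a l' (P_op hbar a l f) x"
proof
  fix x :: "real^'g" assume x: "x \<in> distinct_coords"
  note f = assms
  have E: "P_op hbar a l1 (P_op hbar a l2 f) x =
     TT (deriv (\<lambda>z. - z) 0) (deriv (deriv (\<lambda>z. - z)) 0) (f x) (\<lambda>j. pd j f x) (\<lambda>k. pd k (pd k f) x)
        (\<lambda>j k. pd j (pd k (pd k f)) x) (\<lambda>j k. pd j (pd j (pd k (pd k f))) x)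
        (\<lambda>j k. deriv (rr hbar a x j k) 0) (\<lambda>j k. deriv (deriv (rr hbar a x j k)) 0)
        (pif l1 x) (\<lambda>j. Bc hbar a l1 j x) (\<lambda>j. Mf x j l1) (\<lambda>j k. betaf hbar a x j k l1)
        (pif l2 x) (\<lambda>j. Bc hbar a l2 j x) (\<lambda>j. Mf x j l2) (\<lambda>j k. betaf hbar a x j k l2)" for l1 l2
    unfolding TT_def P_op_eq[of hbar a l1] pdpd_P[OF f x, symmetric]
    by (simp add: P_op_eq)
  show "P_op hbar a l (P_op hbar a l' f) x = P_op hbar a l' (P_op hbar a l f) x"
    unfolding E
    by (rule TT_sym) (auto intro: H1 H2 pd4[OF f x])
qed

end
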